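(* There exist absolute constants $\alpha>0$ and $C$ such that the following holds for all positive integers $n$. Let integers $i\ne j$ and $k=i+j$ satisfy $|i|,|j|\le2w$ and $|k|\le w$, and let $(m,M)$ be the height profile of some sum-free set $S_0\subseteq\Lambda(R\cup L)$ meeting every fiber. Then the number of sets $S'\subseteq R_i\cup R_j\cup L_k$ such that $S'=S\cap(R_i\cup R_j\cup L_k)$ for some sum-free $S\subseteq\Lambda(R\cup L)$ with height profile $(m,M)$ is at most $2^{0.3n-\alpha|M(k)-m(j)-m(i)|+C}$.
   Context: Sum-free: no $a,b,c$ (not necessarily distinct) with $a+b=c$, coordinatewise addition in $\mathbb{Z}^2$. $\Lambda(X)=\mathbb{Z}^2\cap X$. $R=\{(x,y)\in\mathbb{R}^2:0.7n\le x+y\le n,\ |x-y|\le0.8n\}$, $L=\{(x,y)\in\mathbb{R}^2:2\lceil0.7n\rceil\le x+y\le1.7n,\ |x-y|\le0.4n\}$, $w=\lfloor0.4n\rfloor$. Fibers: $R_i=\{(x,y)\in\Lambda(R):x-y=i\}$ for $|i|\le2w$ and $L_k=\{(x,y)\in\Lambda(L):x-y=k\}$ for $|k|\le w$. Height: $h(x,y)=\lfloor(x+y-\lceil0.7n\rceil)/2\rfloor$ for $(x,y)\in R$ and $h(x,y)=\lfloor(x+y-2\lceil0.7n\rceil)/2\rfloor$ for $(x,y)\in L$. For a sum-free $S\subseteq\Lambda(R\cup L)$ meeting every fiber $R_i$ ($|i|\le 2w$) and $L_k$ ($|k|\le w$), its height profile is $(m,M)$ where $m(i)=\min\{h(p):p\in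 S\cap R_i\}$ for $|i|\le2w$ and $M(k)=\max\{h(p):p\in S\cap L_k\}$ for $|k|\le w$. *)

theory Defs
  imports Complex_Main
begin

type_synonym pt = "int \<times> int"

definition sum_free :: "pt set \<Rightarrow> bool" where
  "sum_free S \<longleftrightarrow> (\<forall>a\<in>S. \<forall>b\<in>S. (fst a + fst b, snd a + snd b) \<notin> S)"

definition c07 :: "nat \<Rightarrow> int" where
  "c07 n = \<lceil>(7/10) * real n\<rceil>"

definition wid :: "nat \<Rightarrow> int" where
  "wid n = \<lfloor>(4/10) * real n\<rfloor>"

definition LamR :: "nat \<Rightarrow> pt set" where
  "LamR n = {(x, y). (7/10) * real n \<le> real_of_int (x + y) \<and> real_of_int (x + y) \<le> real n
              \<and> \<bar>real_of_int (x - y)\<bar> \<le> (8/10) * real n}"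

definition LamL :: "nat \<Rightarrow> pt set" where
  "LamL n = {(x, y). real_of_int (2 * c07 n) \<le> real_of_int (x + y)
              \<and> real_of_int (x + y) \<le> (17/10) * real n
              \<and> \<bar>real_of_int (x - y)\<bar> \<le> (4/10) * real n}"

definition fibR :: "nat \<Rightarrow> int \<Rightarrow> pt set" where
  "fibR n i = {p \<in> LamR n. fst p - snd p = i}"

definition fibL :: "nat \<Rightarrow> int \<Rightarrow> pt set" where
  "fibL n k = {p \<in> LamL n. fst p - snd p = k}"

definition hR :: "nat \<Rightarrow> pt \<Rightarrow> int" where
  "hR n p = \<lfloor>real_of_int (fst p + snd p - c07 n) / 2\<rfloor>"

definition hL :: "nat \<Rightarrow> pt \<Rightarrow> int" where
  "hL n p = \<lfloor>real_of_int (fst p + snd p - 2 * c07 n) / 2\<rfloor>"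

definition meets_all_fibers :: "nat \<Rightarrow> pt set \<Rightarrow> bool" where
  "meets_all_fibers n S \<longleftrightarrow>
     (\<forall>i. \<bar>i\<bar> \<le> 2 * wid n \<longrightarrow> S \<inter> fibR n i \<noteq> {}) \<and>
     (\<forall>k. \<bar>k\<bar> \<le> wid n \<longrightarrow> S \<inter> fibL n k \<noteq> {})"

definition has_profile :: "nat \<Rightarrow> pt set \<Rightarrow> (int \<Rightarrow> int) \<Rightarrow> (int \<Rightarrow> int) \<Rightarrow> bool" where
  "has_profile n S m M \<longleftrightarrow> meets_all_fibers n S \<and>
     (\<forall>i. \<bar>i\<bar> \<le> 2 * wid n \<longrightarrow> m i = Min (hR n ` (S \<inter> fibR n i))) \<and>
     (\<forall>k. \<bar>k\<bar> \<le> wid n \<longrightarrow> M k = Max (hL n ` (S \<inter> fibL n k)))"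

end

theory Submission
  imports Defs
begin

type_synonym st = "bool \<times> bool \<times> bool"

definition e0 :: st where "e0 = (False, False, False)"

fun wt :: "st \<Rightarrow> st \<Rightarrow> real" where
  "wt (a', b', c') (a, b, c) = 2 ^ ((if \<not> b \<and> \<not> c then 1 else 0) + (if \<not> a \<and> \<not> c \<and> \<not> c' then 1 else 0)
      + (if \<not> a \<and> \<not> b \<and> \<not> b' then 1 else 0))"

fun vp :: "st \<Rightarrow> real" where
  "vp (a, b, c) = (if b then (if c then 30 else 40) else (if c then 40 else 57))"

lemma UNIV_st: "(UNIV :: st set) = {(False,False,False),(False,False,True),(False,True,False),(False,True,True),
   (True,False,False),(True,False,True),(True,True,False),(True,True,True)}"
  by auto

lemma pot: "(\<Sum>s\<in>UNIV. wt s' s * vp s) \<le> 153/10 * vp s'"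
  apply (cases s')
  by (simp add: UNIV_st)

lemma vp_pos: "vp s \<ge> 30"
  by (cases s) auto

definition sx :: "st list \<Rightarrow> nat \<Rightarrow> st" where
  "sx xs r = (if 1 \<le> r \<and> r \<le> length xs then xs ! (r - 1) else e0)"

definition WW :: "nat \<Rightarrow> st list \<Rightarrow> real" where
  "WW a xs = (\<Prod>r\<in>{1..length xs}. wt (sx xs (r - a)) (sx xs r))"

definition VV :: "nat \<Rightarrow> st list \<Rightarrow> real" where
  "VV a xs = (\<Prod>q<a. vp (sx xs (length xs - q)))"

definition LL :: "nat \<Rightarrow> nat \<Rightarrow> st list set" where
  "LL a n = {xs. length xs = n \<and> (\<forall>r. 1 \<le> r \<longrightarrow> r < a \<longrightarrow> r \<le> n \<longrightarrow> xs ! (r - 1) = e0)}"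

lemma sx_snoc: "sx (xs @ [s]) r = (if r = Suc (length xs) then s else sx xs r)"
  by (auto simp: sx_def nth_append)

lemma sx0[simp]: "sx xs 0 = e0"
  by (simp add: sx_def)

lemma WW_snoc:
  assumes "a \<ge> 1"
  shows "WW a (xs @ [s]) = WW a xs * wt (sx xs (Suc (length xs) - a)) s"
proof -
  have "WW a (xs @ [s]) = (\<Prod>r\<in>{1..Suc (length xs)}. wt (sx (xs@[s]) (r - a)) (sx (xs@[s]) r))"
    by (simp add: WW_def)
  also have "\<dots> = (\<Prod>r\<in>{1..length xs}. wt (sx (xs@[s]) (r - a)) (sx (xs@[s]) r)) *
      wt (sx (xs@[s]) (Suc (length xs) - a)) (sx (xs@[s]) (Suc (length xs)))"
    by (simp add: prod.cl_ivl_Suc)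
  also have "(\<Prod>r\<in>{1..length xs}. wt (sx (xs@[s]) (r - a)) (sx (xs@[s]) r)) = WW a xs"
    unfolding WW_def by (rule prod.cong) (auto simp: sx_snoc)
  also have "sx (xs@[s]) (Suc (length xs) - a) = sx xs (Suc (length xs) - a)"
    using assms by (auto simp: sx_snoc)
  finally show ?thesis by (simp add: sx_snoc)
qed

lemma VV_snoc:
  assumes "a \<ge> 1"
  shows "VV a (xs @ [s]) * vp (sx xs (Suc (length xs) - a)) = vp s * VV a xs"
proof -
  obtain b where b: "a = Suc b" using assms by (cases a) auto
  have "VV a (xs @ [s]) = vp s * (\<Prod>q<b. vp (sx (xs@[s]) (length xs - q)))"
    unfolding VV_def b prod.lessThan_Suc_shift by (simp add: sx_snoc)
  also have "(\<Prod>q<b. vp (sx (xs@[s]) (length xs - q))) = (\<Prod>q<b. vp (sx xs (length xs - q)))"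
    by (rule prod.cong) (auto simp: sx_snoc)
  moreover have "VV a xs = (\<Prod>q<b. vp (sx xs (length xs - q))) * vp (sx xs (length xs - b))"
    unfolding VV_def b by simp
  moreover have "length xs - b = Suc (length xs) - a" using b by simp
  ultimately show ?thesis by simp
qed

definition SS :: "nat \<Rightarrow> nat \<Rightarrow> st set" where
  "SS a n = (if Suc n < a then {e0} else UNIV)"

lemma LL_Suc: "LL a (Suc n) = (\<lambda>(xs, s). xs @ [s]) ` (LL a n \<times> SS a n)"
proof (rule set_eqI, rule iffI)
  fix ys assume ys: "ys \<in> LL a (Suc n)"
  then have len: "length ys = Suc n" by (simp add: LL_def)
  then obtain xs s where yss: "ys = xs @ [s]"
    by (metis append_butlast_last_id length_0_conv nat.distinct(1))
  have lx: "length xs = n" using len yss by simp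
  have "xs \<in> LL a n"
    unfolding LL_def
  proof (intro CollectI conjI allI impI)
    show "length xs = n" by (rule lx)
  next
    fix r assume r: "1 \<le> r" "r < a" "r \<le> n"
    have "ys ! (r - 1) = e0" using ys r by (auto simp: LL_def)
    moreover have "r - 1 < n" using r by simp
    ultimately show "xs ! (r - 1) = e0" using lx by (simp add: yss nth_append)
  qed
  moreover have "s \<in> SS a n"
  proof (cases "Suc n < a")
    case True
    then have "ys ! (Suc n - 1) = e0" using ys by (auto simp: LL_def)
    then show ?thesis using True lx by (simp add: yss SS_def nth_append)
  next
    case False then show ?thesis by (simp add: SS_def)
  qed
  ultimately show "ys \<in> (\<lambda>(xs, s). xs @ [s]) ` (LL a n \<times> SS a n)"
    using yss by auto
next
  fix ys assume "ys \<in> (\<lambda>(xs, s). xs @ [s]) ` (LL a n \<times> SS a n)"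
  then obtain xs s where yss: "ys = xs @ [s]" and xs: "xs \<in> LL a n" and s: "s \<in> SS a n" by auto
  have lx: "length xs = n" using xs by (simp add: LL_def)
  show "ys \<in> LL a (Suc n)"
    unfolding LL_def
  proof (intro CollectI conjI allI impI)
    show "length ys = Suc n" using yss lx by simp
  next
    fix r assume r: "1 \<le> r" "r < a" "r \<le> Suc n"
    show "ys ! (r - 1) = e0"
    proof (cases "r = Suc n")
      case True
      then show ?thesis using s r lx by (simp add: yss SS_def nth_append split: if_splits)
    next
      case False
      then show ?thesis using xs r lx by (auto simp: yss LL_def nth_append)
    qed
  qed
qed

lemma finite_LL: "finite (LL a n)"
proof -
  have "LL a n \<subseteq> {xs. set xs \<subseteq> UNIV \<and> length xs = n}" by (auto simp: LL_def)
  moreover have "finite {xs. set xs \<subseteq> (UNIV::st set) \<and> length xs = n}"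
    by (rule finite_lists_length_eq) simp
  ultimately show ?thesis by (rule finite_subset)
qed

lemma sum_LL_Suc: "(\<Sum>ys\<in>LL a (Suc n). f ys) = (\<Sum>xs\<in>LL a n. \<Sum>s\<in>SS a n. f (xs @ [s]))"
proof -
  have inj: "inj_on (\<lambda>(xs, s). xs @ [s]) (LL a n \<times> SS a n)"
    by (auto simp: inj_on_def)
  have "(\<Sum>ys\<in>LL a (Suc n). f ys) = (\<Sum>p\<in>LL a n \<times> SS a n. f ((\<lambda>(xs, s). xs @ [s]) p))"
    unfolding LL_Suc by (rule sum.reindex[OF inj, unfolded comp_def])
  also have "\<dots> = (\<Sum>xs\<in>LL a n. \<Sum>s\<in>SS a n. f (xs @ [s]))"
    by (subst sum.cartesian_product) (simp add: case_prod_beta)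
  finally show ?thesis .
qed

lemma WV_pos: "WW a xs \<ge> 0" "VV a xs > 0"
proof -
  have "\<And>p s. wt p s \<ge> 0" by (case_tac p, case_tac s) auto
  then show "WW a xs \<ge> 0" unfolding WW_def by (intro prod_nonneg) auto
  have "\<And>s. vp s > 0" using vp_pos by (smt (verit))
  then show "VV a xs > 0" unfolding VV_def by (intro prod_pos) auto
qed

lemma pot_LL:
  assumes "a \<ge> 1"
  shows "(\<Sum>xs\<in>LL a n. WW a xs * VV a xs) \<le> 57 ^ a * 8 ^ (min n (a - 1)) * (153/10) ^ (n - (a - 1))"
proof (induction n)
  case 0
  have "LL a 0 = {[]}" by (auto simp: LL_def)
  moreover have "VV a [] = 57 ^ a" by (simp add: VV_def e0_def)
  ultimately show ?case by (simp add: WW_def)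
next
  case (Suc n)
  have step: "(\<Sum>s\<in>SS a n. WW a (xs @ [s]) * VV a (xs @ [s]))
      \<le> (if Suc n < a then 8 else 153/10) * (WW a xs * VV a xs)" if xs: "xs \<in> LL a n" for xs
  proof -
    have lx: "length xs = n" using xs by (simp add: LL_def)
    define p where "p = sx xs (Suc n - a)"
    have vpp: "vp p > 0" using vp_pos[of p] by simp
    have eq: "WW a (xs @ [s]) * VV a (xs @ [s]) = WW a xs * VV a xs * (wt p s * vp s) / vp p" for s
    proof -
      have "VV a (xs @ [s]) * vp p = vp s * VV a xs"
        using VV_snoc[OF assms, of xs s] lx by (simp add: p_def)
      then have "VV a (xs @ [s]) = vp s * VV a xs / vp p" using vpp by (simp add: field_simps)
      then show ?thesis using WW_snoc[OF assms, of xs s] lx by (simp add: p_def)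
    qed
    show ?thesis
    proof (cases "Suc n < a")
      case True
      then have "p = e0" unfolding p_def by simp
      then show ?thesis using True vpp by (simp add: SS_def eq e0_def)
    next
      case False
      have "(\<Sum>s\<in>SS a n. WW a (xs @ [s]) * VV a (xs @ [s]))
          = WW a xs * VV a xs / vp p * (\<Sum>s\<in>UNIV. wt p s * vp s)"
        using False by (simp add: SS_def eq sum_distrib_left)
      also have "\<dots> \<le> WW a xs * VV a xs / vp p * (153/10 * vp p)"
        using pot[of p] WV_pos[of a xs] vpp by (intro mult_left_mono) auto
      also have "\<dots> = 153/10 * (WW a xs * VV a xs)" using vpp by simp
      finally show ?thesis using False by simp
    qed
  qed
  have "(\<Sum>ys\<in>LL a (Suc n). WW a ys * VV a ys) = (\<Sum>xs\<in>LL a n. \<Sum>s\<in>SS a n. WW a (xs @ [s]) * VV a (xs @ [s]))"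
    by (rule sum_LL_Suc)
  also have "\<dots> \<le> (\<Sum>xs\<in>LL a n. (if Suc n < a then 8 else 153/10) * (WW a xs * VV a xs))"
    by (rule sum_mono) (rule step)
  also have "\<dots> = (if Suc n < a then 8 else 153/10) * (\<Sum>xs\<in>LL a n. WW a xs * VV a xs)"
    by (simp add: sum_distrib_left)
  also have "\<dots> \<le> (if Suc n < a then 8 else 153/10) * (57 ^ a * 8 ^ (min n (a - 1)) * (153/10) ^ (n - (a - 1)))"
    by (rule mult_left_mono[OF Suc.IH]) simp
  also have "\<dots> = 57 ^ a * 8 ^ (min (Suc n) (a - 1)) * (153/10) ^ (Suc n - (a - 1))"
  proof (cases "Suc n < a")
    case True
    then have "min (Suc n) (a - 1) = Suc (min n (a - 1))" "Suc n - (a - 1) = n - (a - 1)" by auto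
    then show ?thesis using True by simp
  next
    case False
    then have "min (Suc n) (a - 1) = min n (a - 1)" "Suc n - (a - 1) = Suc (n - (a - 1))" by auto
    then show ?thesis using False by simp
  qed
  finally show ?case .
qed

lemma sum_W_LL:
  assumes "a \<ge> 1" "a \<le> n + 1"
  shows "(\<Sum>xs\<in>LL a n. WW a xs) \<le> (153/10) ^ (n + 1) / 8"
proof -
  have VV30: "VV a xs \<ge> 30 ^ a" for xs
  proof -
    have "(\<Prod>q<a. (30::real)) \<le> VV a xs"
      unfolding VV_def by (rule prod_mono) (use vp_pos in auto)
    then show ?thesis by simp
  qed
  have "(\<Sum>xs\<in>LL a n. WW a xs) \<le> (\<Sum>xs\<in>LL a n. WW a xs * VV a xs / 30 ^ a)"
  proof (rule sum_mono)
    fix xs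
    have "WW a xs * 30 ^ a \<le> WW a xs * VV a xs"
      using VV30[of xs] WV_pos(1)[of a xs] by (intro mult_left_mono) auto
    then show "WW a xs \<le> WW a xs * VV a xs / 30 ^ a" by (simp add: field_simps)
  qed
  also have "\<dots> = (\<Sum>xs\<in>LL a n. WW a xs * VV a xs) / 30 ^ a"
    by (simp add: sum_divide_distrib)
  also have "\<dots> \<le> 57 ^ a * 8 ^ (min n (a - 1)) * (153/10) ^ (n - (a - 1)) / 30 ^ a"
    by (rule divide_right_mono[OF pot_LL[OF assms(1)]]) simp
  also have "\<dots> = (76/5) ^ a * (153/10) ^ (n + 1 - a) / 8"
  proof -
    have m: "min n (a - 1) = a - 1" "n - (a - 1) = n + 1 - a" using assms by auto
    obtain b where b: "a = Suc b" using assms by (cases a) auto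
    have "(76/5::real) ^ a = (57 * 8 / 30) ^ a" by simp
    also have "\<dots> = 57 ^ a * 8 ^ a / 30 ^ a" by (simp only: power_divide power_mult_distrib)
    also have "(8::real) ^ a = 8 * 8 ^ (a - 1)" unfolding b by simp
    finally have "(57::real) ^ a * 8 ^ (a - 1) / 30 ^ a = (76/5) ^ a / 8" by simp
    then show ?thesis unfolding m by (simp add: field_simps)
  qed
  also have "\<dots> \<le> (153/10) ^ a * (153/10) ^ (n + 1 - a) / 8"
    by (intro divide_right_mono mult_right_mono power_mono) auto
  also have "\<dots> = (153/10) ^ (n + 1) / 8"
    using assms by (simp add: power_add[symmetric])
  finally show ?thesis .
qed

lemma card_allowed:
  assumes "E \<le> 2 * L + 2"
  shows "card {u. L < u \<and> u \<le> N \<and> u \<noteq> E \<and> P (E - u)} \<le> (N - E) + 1 + card {t\<in>{1..L}. P t}"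
proof -
  have sub: "{u. L < u \<and> u \<le> N \<and> u \<noteq> E \<and> P (E - u)} \<subseteq>
      {E<..N} \<union> {L<..<E-L} \<union> (\<lambda>t. E - t) ` {t\<in>{1..L}. P t}"
  proof
    fix u assume u: "u \<in> {u. L < u \<and> u \<le> N \<and> u \<noteq> E \<and> P (E - u)}"
    show "u \<in> {E<..N} \<union> {L<..<E-L} \<union> (\<lambda>t. E - t) ` {t\<in>{1..L}. P t}"
    proof (cases "E < u")
      case True then show ?thesis using u by auto
    next
      case False
      then have "u < E" using u by auto
      show ?thesis
      proof (cases "E - u > L")
        case True then show ?thesis using u by auto
      next
        case False
        then have "E - u \<in> {t\<in>{1..L}. P t}" using u \<open>u < E\<close> by auto
        moreover have "u = E - (E - u)" using \<open>u < E\<close> by simp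
        ultimately show ?thesis by blast
      qed
    qed
  qed
  have "card {u. L < u \<and> u \<le> N \<and> u \<noteq> E \<and> P (E - u)} \<le>
      card ({E<..N} \<union> {L<..<E-L} \<union> (\<lambda>t. E - t) ` {t\<in>{1..L}. P t})"
    by (rule card_mono[OF _ sub]) auto
  also have "\<dots> \<le> card {E<..N} + card {L<..<E-L} + card ((\<lambda>t. E - t) ` {t\<in>{1..L}. P t})"
    by (meson card_Un_le le_trans add_right_mono)
  also have "\<dots> \<le> (N - E) + 1 + card {t\<in>{1..L}. P t}"
  proof -
    have "card {L<..<E-L} \<le> 1" using assms by simp
    moreover have "card ((\<lambda>t. E - t) ` {t\<in>{1..L}. P t}) \<le> card {t\<in>{1..L}. P t}"
      by (rule card_image_le) simp
    ultimately show ?thesis by simp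
  qed
  finally show ?thesis .
qed

definition Tset :: "nat \<Rightarrow> nat \<Rightarrow> nat \<Rightarrow> nat \<Rightarrow> (nat set \<times> nat set \<times> nat set) set" where
  "Tset N1 N2 N3 E = {(A, B, C). A \<subseteq> {..N1} \<and> B \<subseteq> {..N2} \<and> C \<subseteq> {..N3} \<and> 0 \<in> A \<and> 0 \<in> B \<and> 0 \<in> C \<and>
      (\<forall>a\<in>A. \<forall>b\<in>B. \<forall>c\<in>C. a + b + c \<noteq> E)}"

definition DA :: "nat \<Rightarrow> nat \<Rightarrow> nat \<Rightarrow> nat \<Rightarrow> nat \<Rightarrow> nat \<Rightarrow> (nat set \<times> nat set \<times> nat set) set" where
  "DA N1 N2 N3 E L a = {(A, B, C) \<in> Tset N1 N2 N3 E.
      (\<forall>t. 1 \<le> t \<longrightarrow> t < a \<longrightarrow> t \<notin> A \<and> t \<notin> B \<and> t \<notin> C) \<and> (a \<le> L \<longrightarrow> a \<in> A)}"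

definition low :: "nat \<Rightarrow> nat set \<times> nat set \<times> nat set \<Rightarrow> st list" where
  "low L X = map (\<lambda>t. (t \<in> fst X, t \<in> fst (snd X), t \<in> snd (snd X))) [1..<L+1]"

lemma sx_low: "sx (low L X) t = (if 1 \<le> t \<and> t \<le> L then (t \<in> fst X, t \<in> fst (snd X), t \<in> snd (snd X)) else e0)"
  by (auto simp: sx_def low_def simp del: upt_Suc)

definition bA :: "st list \<Rightarrow> nat \<Rightarrow> bool" where
  "bA xs t = (fst (snd (sx xs t)) \<or> snd (snd (sx xs t)))"
definition bB :: "nat \<Rightarrow> st list \<Rightarrow> nat \<Rightarrow> bool" where
  "bB a xs t = (fst (sx xs t) \<or> snd (snd (sx xs t)) \<or> snd (snd (sx xs (t - a))))"
definition bC :: "nat \<Rightarrow> st list \<Rightarrow> nat \<Rightarrow> bool" where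
  "bC a xs t = (fst (sx xs t) \<or> fst (snd (sx xs t)) \<or> fst (snd (sx xs (t - a))))"

lemma wt_b: "wt (sx xs (t - a)) (sx xs t) =
   2 ^ (of_bool (\<not> bA xs t) + of_bool (\<not> bB a xs t) + of_bool (\<not> bC a xs t))"
  unfolding bA_def bB_def bC_def
  by (cases "sx xs t"; cases "sx xs (t - a)") auto

lemma WW_b:
  assumes "length xs = L"
  shows "WW a xs = 2 ^ (card {t\<in>{1..L}. \<not> bA xs t} + card {t\<in>{1..L}. \<not> bB a xs t} + card {t\<in>{1..L}. \<not> bC a xs t})"
proof -
  have "WW a xs = (\<Prod>t\<in>{1..L}. (2::real) ^ (of_bool (\<not> bA xs t) + of_bool (\<not> bB a xs t) + of_bool (\<not> bC a xs t)))"
    unfolding WW_def assms using wt_b by simp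
  also have "\<dots> = 2 ^ (\<Sum>t\<in>{1..L}. (of_bool (\<not> bA xs t) + of_bool (\<not> bB a xs t) + of_bool (\<not> bC a xs t)::nat))"
    by (simp add: power_sum)
  also have "(\<Sum>t\<in>{1..L}. (of_bool (\<not> bA xs t) + of_bool (\<not> bB a xs t) + of_bool (\<not> bC a xs t)::nat))
     = card {t\<in>{1..L}. \<not> bA xs t} + card {t\<in>{1..L}. \<not> bB a xs t} + card {t\<in>{1..L}. \<not> bC a xs t}"
    by (simp add: sum.distrib Int_def Collect_conj_eq[symmetric])
  finally show ?thesis .
qed

lemma sx_ne_e0: "sx xs t \<noteq> e0 \<Longrightarrow> 1 \<le> t \<and> t \<le> length xs"
  by (auto simp: sx_def split: if_splits)

lemma low_len[simp]: "length (low L X) = L"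
  by (simp add: low_def)

lemma DA_allowed:
  assumes X: "(A, B, C) \<in> DA N1 N2 N3 E L a" and EL: "E \<le> 2 * L + 2"
  defines "xs \<equiv> low L (A, B, C)"
  shows "A \<inter> {L<..} \<subseteq> {u. L < u \<and> u \<le> N1 \<and> u \<noteq> E \<and> \<not> bA xs (E - u)}"
    and "B \<inter> {L<..} \<subseteq> {u. L < u \<and> u \<le> N2 \<and> u \<noteq> E \<and> \<not> bB a xs (E - u)}"
    and "C \<inter> {L<..} \<subseteq> {u. L < u \<and> u \<le> N3 \<and> u \<noteq> E \<and> \<not> bC a xs (E - u)}"
proof -
  have T: "A \<subseteq> {..N1}" "B \<subseteq> {..N2}" "C \<subseteq> {..N3}" "0 \<in> A" "0 \<in> B" "0 \<in> C"
    and no: "\<And>x y z. x \<in> A \<Longrightarrow> y \<in> B \<Longrightarrow> z \<in> C \<Longrightarrow> x + y + z \<noteq> E"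
    and aA: "a \<le> L \<Longrightarrow> a \<in> A"
    using X by (auto simp: DA_def Tset_def)
  have sxx: "sx xs t = (if 1 \<le> t \<and> t \<le> L then (t \<in> A, t \<in> B, t \<in> C) else e0)" for t
    unfolding xs_def sx_low by simp
  have sxE: "1 \<le> t \<and> t \<le> L \<and> P (t \<in> A, t \<in> B, t \<in> C)" if "P (sx xs t)" "\<not> P e0" for t P
    using that sxx[of t] by (auto split: if_splits)
  show "A \<inter> {L<..} \<subseteq> {u. L < u \<and> u \<le> N1 \<and> u \<noteq> E \<and> \<not> bA xs (E - u)}"
  proof
    fix u assume "u \<in> A \<inter> {L<..}"
    then have u: "u \<in> A" "L < u" by auto
    have "u \<le> N1" using u T by auto
    moreover have "u \<noteq> E" using no[OF u(1) T(5) T(6)] by auto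
    moreover have "\<not> bA xs (E - u)"
    proof
    assume "bA xs (E - u)"
    then have "1 \<le> E - u \<and> E - u \<le> L \<and> (E - u \<in> B \<or> E - u \<in> C)"
      unfolding bA_def using sxE[of "\<lambda>s. fst (snd s) \<or> snd (snd s)" "E - u"] by (simp add: e0_def)
    then show False using no[OF u(1) _ T(6), of "E - u"] no[OF u(1) T(5), of "E - u"] by auto
    qed
    ultimately show "u \<in> {u. L < u \<and> u \<le> N1 \<and> u \<noteq> E \<and> \<not> bA xs (E - u)}" using u by simp
  qed
  show "B \<inter> {L<..} \<subseteq> {u. L < u \<and> u \<le> N2 \<and> u \<noteq> E \<and> \<not> bB a xs (E - u)}"
  proof
    fix u assume "u \<in> B \<inter> {L<..}"
    then have u: "u \<in> B" "L < u" by auto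
    have "u \<le> N2" using u T by auto
    moreover have "u \<noteq> E" using no[OF T(4) u(1) T(6)] by auto
    moreover have "\<not> bB a xs (E - u)"
    proof
    assume b: "bB a xs (E - u)"
    show False
    proof (cases "fst (sx xs (E - u)) \<or> snd (snd (sx xs (E - u)))")
      case True
      then have "1 \<le> E - u \<and> E - u \<le> L \<and> (E - u \<in> A \<or> E - u \<in> C)"
        using sxE[of "\<lambda>s. fst s \<or> snd (snd s)" "E - u"] by (simp add: e0_def)
      then show False using no[OF _ u(1) T(6), of "E - u"] no[OF T(4) u(1), of "E - u"] by auto
    next
      case False
      then have "snd (snd (sx xs (E - u - a)))" using b by (simp add: bB_def)
      then have h: "1 \<le> E - u - a \<and> E - u - a \<le> L \<and> E - u - a \<in> C"
        using sxE[of "\<lambda>s. snd (snd s)" "E - u - a"] by (simp add: e0_def)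
      then have "a \<le> L" using u EL by linarith
      then have "a \<in> A" by (rule aA)
      then show False using no[OF _ u(1), of a "E - u - a"] h by auto
    qed
    qed
    ultimately show "u \<in> {u. L < u \<and> u \<le> N2 \<and> u \<noteq> E \<and> \<not> bB a xs (E - u)}" using u by simp
  qed
  show "C \<inter> {L<..} \<subseteq> {u. L < u \<and> u \<le> N3 \<and> u \<noteq> E \<and> \<not> bC a xs (E - u)}"
  proof
    fix u assume "u \<in> C \<inter> {L<..}"
    then have u: "u \<in> C" "L < u" by auto
    have "u \<le> N3" using u T by auto
    moreover have "u \<noteq> E" using no[OF T(4) T(5) u(1)] by auto
    moreover have "\<not> bC a xs (E - u)"
    proof
    assume b: "bC a xs (E - u)"
    show False
    proof (cases "fst (sx xs (E - u)) \<or> fst (snd (sx xs (E - u)))")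
      case True
      then have "1 \<le> E - u \<and> E - u \<le> L \<and> (E - u \<in> A \<or> E - u \<in> B)"
        using sxE[of "\<lambda>s. fst s \<or> fst (snd s)" "E - u"] by (simp add: e0_def)
      then show False using no[OF _ T(5) u(1), of "E - u"] no[OF T(4) _ u(1), of "E - u"] by auto
    next
      case False
      then have "fst (snd (sx xs (E - u - a)))" using b by (simp add: bC_def)
      then have h: "1 \<le> E - u - a \<and> E - u - a \<le> L \<and> E - u - a \<in> B"
        using sxE[of "\<lambda>s. fst (snd s)" "E - u - a"] by (simp add: e0_def)
      then have "a \<le> L" using u EL by linarith
      then have "a \<in> A" by (rule aA)
      then show False using no[OF _ _ u(1), of a "E - u - a"] h by auto
    qed
    qed
    ultimately show "u \<in> {u. L < u \<and> u \<le> N3 \<and> u \<noteq> E \<and> \<not> bC a xs (E - u)}" using u by simp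
  qed
qed

lemma card_DA:
  assumes a: "1 \<le> a" "a \<le> L + 1" and EL: "E \<le> 2 * L + 2" and EN: "E \<le> N1" "E \<le> N2" "E \<le> N3"
  shows "real (card (DA N1 N2 N3 E L a)) \<le> 2 ^ (N1 + N2 + N3 - 3 * E + 3) * ((153/10) ^ (L + 1) / 8)"
proof -
  define G where "G xs = {X \<in> DA N1 N2 N3 E L a. low L X = xs}" for xs
  define AA where "AA xs = {u. L < u \<and> u \<le> N1 \<and> u \<noteq> E \<and> \<not> bA xs (E - u)}" for xs
  define BB where "BB xs = {u. L < u \<and> u \<le> N2 \<and> u \<noteq> E \<and> \<not> bB a xs (E - u)}" for xs
  define CC where "CC xs = {u. L < u \<and> u \<le> N3 \<and> u \<noteq> E \<and> \<not> bC a xs (E - u)}" for xs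
  define gm where "gm xs = (\<lambda>(P, Q, R). (insert 0 ({t\<in>{1..L}. fst (sx xs t)} \<union> P),
      insert 0 ({t\<in>{1..L}. fst (snd (sx xs t))} \<union> Q), insert 0 ({t\<in>{1..L}. snd (snd (sx xs t))} \<union> R)))" for xs
  have cover: "DA N1 N2 N3 E L a \<subseteq> (\<Union>xs\<in>LL a L. G xs)"
  proof
    fix X assume X: "X \<in> DA N1 N2 N3 E L a"
    obtain A B C where XA: "X = (A, B, C)" by (cases X)
    have "low L X \<in> LL a L"
      unfolding LL_def
    proof (intro CollectI conjI allI impI)
      show "length (low L X) = L" by simp
      fix r assume r: "1 \<le> r" "r < a" "r \<le> L"
      have "low L X ! (r - 1) = sx (low L X) r" using r by (simp add: sx_def)
      also have "\<dots> = e0" using X r unfolding sx_low XA by (auto simp: DA_def e0_def)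
      finally show "low L X ! (r - 1) = e0" .
    qed
    then show "X \<in> (\<Union>xs\<in>LL a L. G xs)" using X by (auto simp: G_def)
  qed
  have cardG: "real (card (G xs)) \<le> 2 ^ (N1 + N2 + N3 - 3 * E + 3) * WW a xs" if xs: "xs \<in> LL a L" for xs
  proof -
    have lx: "length xs = L" using xs by (simp add: LL_def)
    have sub: "G xs \<subseteq> gm xs ` (Pow (AA xs) \<times> Pow (BB xs) \<times> Pow (CC xs))"
    proof
      fix X assume X: "X \<in> G xs"
      obtain A B C where XA: "X = (A, B, C)" by (cases X)
      have D: "(A, B, C) \<in> DA N1 N2 N3 E L a" and lw: "low L (A, B, C) = xs"
        using X XA by (auto simp: G_def)
      have al: "A \<inter> {L<..} \<subseteq> AA xs" "B \<inter> {L<..} \<subseteq> BB xs" "C \<inter> {L<..} \<subseteq> CC xs"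
        using DA_allowed[OF D EL] lw by (auto simp: AA_def BB_def CC_def)
      have z: "0 \<in> A" "0 \<in> B" "0 \<in> C" using D by (auto simp: DA_def Tset_def)
      have sxx: "sx xs t = (if 1 \<le> t \<and> t \<le> L then (t \<in> A, t \<in> B, t \<in> C) else e0)" for t
        unfolding lw[symmetric] sx_low by simp
      have split3: "S = insert 0 ({t\<in>{1..L}. t \<in> S} \<union> S \<inter> {L<..})" if "0 \<in> S" for S :: "nat set"
        using that by (auto simp: not_less)
      have "X = gm xs (A \<inter> {L<..}, B \<inter> {L<..}, C \<inter> {L<..})"
        unfolding XA gm_def sxx using split3[OF z(1)] split3[OF z(2)] split3[OF z(3)]
        by (simp cong: conj_cong)
      then show "X \<in> gm xs ` (Pow (AA xs) \<times> Pow (BB xs) \<times> Pow (CC xs))"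
        using al by blast
    qed
    have fin: "finite (AA xs)" "finite (BB xs)" "finite (CC xs)"
      by (auto simp: AA_def BB_def CC_def)
    have "card (G xs) \<le> card (gm xs ` (Pow (AA xs) \<times> Pow (BB xs) \<times> Pow (CC xs)))"
      by (rule card_mono[OF _ sub]) (use fin in auto)
    also have "\<dots> \<le> card (Pow (AA xs) \<times> Pow (BB xs) \<times> Pow (CC xs))"
      by (rule card_image_le) (use fin in auto)
    also have "\<dots> = 2 ^ (card (AA xs) + card (BB xs) + card (CC xs))"
      using fin by (simp add: card_cartesian_product card_Pow power_add)
    finally have c1: "card (G xs) \<le> 2 ^ (card (AA xs) + card (BB xs) + card (CC xs))" .
    have "card (AA xs) + card (BB xs) + card (CC xs) \<le>
       (N1 + N2 + N3 - 3 * E + 3) + (card {t\<in>{1..L}. \<not> bA xs t} + card {t\<in>{1..L}. \<not> bB a xs t} + card {t\<in>{1..L}. \<not> bC a xs t})"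
    proof -
      have "card (AA xs) \<le> (N1 - E) + 1 + card {t\<in>{1..L}. \<not> bA xs t}"
        unfolding AA_def by (rule card_allowed[OF EL])
      moreover have "card (BB xs) \<le> (N2 - E) + 1 + card {t\<in>{1..L}. \<not> bB a xs t}"
        unfolding BB_def by (rule card_allowed[OF EL])
      moreover have "card (CC xs) \<le> (N3 - E) + 1 + card {t\<in>{1..L}. \<not> bC a xs t}"
        unfolding CC_def by (rule card_allowed[OF EL])
      ultimately show ?thesis using EN by linarith
    qed
    then have "(2::real) ^ (card (AA xs) + card (BB xs) + card (CC xs)) \<le>
       2 ^ ((N1 + N2 + N3 - 3 * E + 3) + (card {t\<in>{1..L}. \<not> bA xs t} + card {t\<in>{1..L}. \<not> bB a xs t} + card {t\<in>{1..L}. \<not> bC a xs t}))"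
      by (rule power_increasing) simp
    also have "\<dots> = 2 ^ (N1 + N2 + N3 - 3 * E + 3) * WW a xs"
      unfolding WW_b[OF lx] by (simp add: power_add)
    moreover have "real (card (G xs)) \<le> (2::real) ^ (card (AA xs) + card (BB xs) + card (CC xs))"
      using c1 by (metis of_nat_le_iff of_nat_numeral of_nat_power)
    ultimately show ?thesis by linarith
  qed
  have finG: "finite (G xs)" for xs
  proof -
    have "G xs \<subseteq> Pow {..N1} \<times> Pow {..N2} \<times> Pow {..N3}"
      by (auto simp: G_def DA_def Tset_def)
    then show ?thesis by (rule finite_subset) auto
  qed
  have "card (DA N1 N2 N3 E L a) \<le> card (\<Union>xs\<in>LL a L. G xs)"
    by (rule card_mono[OF _ cover]) (auto intro: finG finite_LL)
  also have "\<dots> \<le> (\<Sum>xs\<in>LL a L. card (G xs))"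
    by (rule card_UN_le[OF finite_LL])
  finally have "real (card (DA N1 N2 N3 E L a)) \<le> (\<Sum>xs\<in>LL a L. real (card (G xs)))"
    by (metis of_nat_le_iff of_nat_sum)
  also have "\<dots> \<le> (\<Sum>xs\<in>LL a L. 2 ^ (N1 + N2 + N3 - 3 * E + 3) * WW a xs)"
    by (rule sum_mono) (rule cardG)
  also have "\<dots> = 2 ^ (N1 + N2 + N3 - 3 * E + 3) * (\<Sum>xs\<in>LL a L. WW a xs)"
    by (simp add: sum_distrib_left)
  also have "\<dots> \<le> 2 ^ (N1 + N2 + N3 - 3 * E + 3) * ((153/10) ^ (L + 1) / 8)"
    by (rule mult_left_mono[OF sum_W_LL[OF a]]) simp
  finally show ?thesis .
qed

lemma finite_Tset: "finite (Tset N1 N2 N3 E)"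
proof -
  have "Tset N1 N2 N3 E \<subseteq> Pow {..N1} \<times> Pow {..N2} \<times> Pow {..N3}" by (auto simp: Tset_def)
  then show ?thesis by (rule finite_subset) auto
qed

lemma Tset_swap1: "(A, B, C) \<in> Tset N1 N2 N3 E \<Longrightarrow> (B, A, C) \<in> Tset N2 N1 N3 E"
  unfolding Tset_def by (auto, metis add.commute)

lemma Tset_swap2: "(A, B, C) \<in> Tset N1 N2 N3 E \<Longrightarrow> (C, B, A) \<in> Tset N3 N2 N1 E"
  unfolding Tset_def by (auto, metis add.commute add.assoc)

lemma card_Tset:
  assumes E: "1 \<le> E" "E \<le> N1" "E \<le> N2" "E \<le> N3"
  defines "L \<equiv> (E - 1) div 2"
  shows "real (card (Tset N1 N2 N3 E)) \<le> (3 * L + 1) * (2 ^ (N1 + N2 + N3 - 3 * E) * (153/10) ^ (L + 1))"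
proof -
  have EL: "E \<le> 2 * L + 2" unfolding L_def by linarith
  define K :: real where "K = 2 ^ (N1 + N2 + N3 - 3 * E) * (153/10) ^ (L + 1)"
  have K: "2 ^ (N1 + N2 + N3 - 3 * E + 3) * ((153/10) ^ (L + 1) / 8) = K"
    unfolding K_def by (simp add: power_add)
  define mc where "mc a (X::nat set \<times> nat set \<times> nat set) = ((\<forall>t::nat. 1 \<le> t \<longrightarrow> t < a \<longrightarrow> t \<notin> fst X \<and> t \<notin> fst (snd X) \<and> t \<notin> snd (snd X)))" for a X
  define DB where "DB a = {X \<in> Tset N1 N2 N3 E. mc a X \<and> (a \<le> L \<longrightarrow> a \<in> fst (snd X))}" for a
  define DC where "DC a = {X \<in> Tset N1 N2 N3 E. mc a X \<and> (a \<le> L \<longrightarrow> a \<in> snd (snd X))}" for a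
  have DA1: "real (card (DA N1 N2 N3 E L a)) \<le> K" if "1 \<le> a" "a \<le> L + 1" for a
    using card_DA[OF that EL E(2-4)] K by simp
  have DB1: "real (card (DB a)) \<le> K" if a: "1 \<le> a" "a \<le> L + 1" for a
  proof -
    have "DB a \<subseteq> (\<lambda>(A, B, C). (B, A, C)) ` DA N2 N1 N3 E L a"
    proof
      fix X assume X: "X \<in> DB a"
      obtain A B C where XA: "X = (A, B, C)" by (cases X)
      have "(B, A, C) \<in> Tset N2 N1 N3 E" using X Tset_swap1 unfolding XA DB_def by auto
      then have "(B, A, C) \<in> DA N2 N1 N3 E L a"
        using X unfolding XA DB_def DA_def mc_def by auto
      then have mem: "(B, A, C) \<in> DA N2 N1 N3 E L a" .
      show "X \<in> (\<lambda>(A, B, C). (B, A, C)) ` DA N2 N1 N3 E L a"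
        unfolding XA by (rule image_eqI[where x="(B, A, C)", OF _ mem]) simp
    qed
    note sub = this
    have fin: "finite (DA N2 N1 N3 E L a)" by (rule finite_subset[OF _ finite_Tset]) (auto simp: DA_def)
    have "card (DB a) \<le> card ((\<lambda>(A, B, C). (B, A, C)) ` DA N2 N1 N3 E L a)"
      by (rule card_mono[OF finite_imageI[OF fin] sub])
    also have "\<dots> \<le> card (DA N2 N1 N3 E L a)" by (rule card_image_le[OF fin])
    finally have "real (card (DB a)) \<le> real (card (DA N2 N1 N3 E L a))" by simp
    also have "\<dots> \<le> K"
      using card_DA[OF a EL E(3) E(2) E(4)] K by (simp add: add.commute add.left_commute)
    finally show ?thesis .
  qed
  have DC1: "real (card (DC a)) \<le> K" if a: "1 \<le> a" "a \<le> L + 1" for a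
  proof -
    have "DC a \<subseteq> (\<lambda>(A, B, C). (C, B, A)) ` DA N3 N2 N1 E L a"
    proof
      fix X assume X: "X \<in> DC a"
      obtain A B C where XA: "X = (A, B, C)" by (cases X)
      have "(C, B, A) \<in> Tset N3 N2 N1 E" using X Tset_swap2 unfolding XA DC_def by auto
      then have "(C, B, A) \<in> DA N3 N2 N1 E L a"
        using X unfolding XA DC_def DA_def mc_def by auto
      then have mem: "(C, B, A) \<in> DA N3 N2 N1 E L a" .
      show "X \<in> (\<lambda>(A, B, C). (C, B, A)) ` DA N3 N2 N1 E L a"
        unfolding XA by (rule image_eqI[where x="(C, B, A)", OF _ mem]) simp
    qed
    note sub = this
    have fin: "finite (DA N3 N2 N1 E L a)" by (rule finite_subset[OF _ finite_Tset]) (auto simp: DA_def)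
    have "card (DC a) \<le> card ((\<lambda>(A, B, C). (C, B, A)) ` DA N3 N2 N1 E L a)"
      by (rule card_mono[OF finite_imageI[OF fin] sub])
    also have "\<dots> \<le> card (DA N3 N2 N1 E L a)" by (rule card_image_le[OF fin])
    finally have "real (card (DC a)) \<le> real (card (DA N3 N2 N1 E L a))" by simp
    also have "\<dots> \<le> K"
      using card_DA[OF a EL E(4) E(3) E(2)] K by (simp add: add.commute add.left_commute)
    finally show ?thesis .
  qed
  have cover: "Tset N1 N2 N3 E \<subseteq> DA N1 N2 N3 E L (L + 1) \<union> (\<Union>a\<in>{1..L}. DA N1 N2 N3 E L a \<union> DB a \<union> DC a)"
  proof
    fix X assume X: "X \<in> Tset N1 N2 N3 E"
    obtain A B C where XA: "X = (A, B, C)" by (cases X)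
    show "X \<in> DA N1 N2 N3 E L (L + 1) \<union> (\<Union>a\<in>{1..L}. DA N1 N2 N3 E L a \<union> DB a \<union> DC a)"
    proof (cases "\<exists>t. 1 \<le> t \<and> t \<le> L \<and> (t \<in> A \<or> t \<in> B \<or> t \<in> C)")
      case False
      have "\<forall>t. 1 \<le> t \<longrightarrow> t < L + 1 \<longrightarrow> t \<notin> A \<and> t \<notin> B \<and> t \<notin> C"
      proof (intro allI impI)
        fix t assume t: "1 \<le> t" "t < L + 1"
        then have "t \<le> L" by simp
        then show "t \<notin> A \<and> t \<notin> B \<and> t \<notin> C" using False t(1) by blast
      qed
      then have "X \<in> DA N1 N2 N3 E L (L + 1)" using X unfolding XA DA_def by simp
      then show ?thesis by blast
    next
      case True
      define a where "a = (LEAST t. 1 \<le> t \<and> t \<le> L \<and> (t \<in> A \<or> t \<in> B \<or> t \<in> C))"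
      have ha: "1 \<le> a \<and> a \<le> L \<and> (a \<in> A \<or> a \<in> B \<or> a \<in> C)"
        unfolding a_def using True by (metis (mono_tags, lifting) LeastI)
      have hm: "\<not> (1 \<le> t \<and> t \<le> L \<and> (t \<in> A \<or> t \<in> B \<or> t \<in> C))" if "t < a" for t
        using not_less_Least[OF that[unfolded a_def]] by blast
      have mca: "mc a X" unfolding mc_def XA fst_conv snd_conv
      proof (intro allI impI)
        fix t assume t: "1 \<le> t" "t < a"
        then have "t \<le> L" using ha by simp
        then show "t \<notin> A \<and> t \<notin> B \<and> t \<notin> C" using hm[OF t(2)] t(1) by blast
      qed
      have minc: "\<forall>t. 1 \<le> t \<longrightarrow> t < a \<longrightarrow> t \<notin> A \<and> t \<notin> B \<and> t \<notin> C"
        using mca unfolding mc_def XA by simp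
      consider "a \<in> A" | "a \<in> B" | "a \<in> C" using ha by blast
      then have "X \<in> DA N1 N2 N3 E L a \<union> DB a \<union> DC a"
      proof cases
        case 1
        then have "X \<in> DA N1 N2 N3 E L a" using X minc unfolding XA DA_def by simp
        then show ?thesis by blast
      next
        case 2
        then have "X \<in> DB a" using X mca unfolding XA DB_def by simp
        then show ?thesis by blast
      next
        case 3
        then have "X \<in> DC a" using X mca unfolding XA DC_def by simp
        then show ?thesis by blast
      qed
      moreover have "a \<in> {1..L}" using ha by simp
      ultimately have "X \<in> (\<Union>a\<in>{1..L}. DA N1 N2 N3 E L a \<union> DB a \<union> DC a)" by (rule UN_I[rotated])
      then show ?thesis by (rule UnI2)
    qed
  qed
  have finD: "finite (DA N1 N2 N3 E L a)" "finite (DB a)" "finite (DC a)" for a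
    by (auto intro: finite_subset[OF _ finite_Tset] simp: DA_def DB_def DC_def)
  have "card (Tset N1 N2 N3 E) \<le> card (DA N1 N2 N3 E L (L + 1) \<union> (\<Union>a\<in>{1..L}. DA N1 N2 N3 E L a \<union> DB a \<union> DC a))"
    by (rule card_mono[OF _ cover]) (auto intro: finD)
  also have "\<dots> \<le> card (DA N1 N2 N3 E L (L + 1)) + card (\<Union>a\<in>{1..L}. DA N1 N2 N3 E L a \<union> DB a \<union> DC a)"
    by (rule card_Un_le)
  also have "card (\<Union>a\<in>{1..L}. DA N1 N2 N3 E L a \<union> DB a \<union> DC a) \<le> (\<Sum>a\<in>{1..L}. card (DA N1 N2 N3 E L a \<union> DB a \<union> DC a))"
    by (rule card_UN_le) simp
  also have "\<dots> \<le> (\<Sum>a\<in>{1..L}. card (DA N1 N2 N3 E L a) + card (DB a) + card (DC a))"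
  proof (rule sum_mono)
    fix a
    have "card (DA N1 N2 N3 E L a \<union> DB a \<union> DC a) \<le> card (DA N1 N2 N3 E L a \<union> DB a) + card (DC a)"
      by (rule card_Un_le)
    moreover have "card (DA N1 N2 N3 E L a \<union> DB a) \<le> card (DA N1 N2 N3 E L a) + card (DB a)"
      by (rule card_Un_le)
    ultimately show "card (DA N1 N2 N3 E L a \<union> DB a \<union> DC a) \<le> card (DA N1 N2 N3 E L a) + card (DB a) + card (DC a)"
      by linarith
  qed
  finally have nat_ineq: "card (Tset N1 N2 N3 E) \<le> card (DA N1 N2 N3 E L (L + 1)) +
      (\<Sum>a\<in>{1..L}. card (DA N1 N2 N3 E L a) + card (DB a) + card (DC a))"
    by simp
  have "real (card (Tset N1 N2 N3 E)) \<le> real (card (DA N1 N2 N3 E L (L + 1)) +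
      (\<Sum>a\<in>{1..L}. card (DA N1 N2 N3 E L a) + card (DB a) + card (DC a)))"
    using nat_ineq by (simp only: of_nat_le_iff)
  also have "\<dots> = real (card (DA N1 N2 N3 E L (L + 1))) +
      (\<Sum>a\<in>{1..L}. real (card (DA N1 N2 N3 E L a)) + real (card (DB a)) + real (card (DC a)))"
    by (simp only: of_nat_add of_nat_sum)
  also have "\<dots> \<le> K + (\<Sum>a\<in>{1..L}. K + K + K)"
    by (intro add_mono DA1 sum_mono DB1 DC1) auto
  also have "\<dots> = (3 * real L + 1) * K" by (simp add: algebra_simps)
  finally show ?thesis unfolding K_def .
qed

lemma lin_geo: "(3 * real L + 1) * (49/50) ^ L \<le> 147"
proof -
  have "1 + real L * (1/49) \<le> (1 + 1/49) ^ L"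
    using Bernoulli_inequality[of "1/49::real" L] by simp
  then have h: "(49 + real L) / 49 \<le> (50/49) ^ L" by (simp add: field_simps)
  have pos: "(0::real) < (49/50) ^ L" by simp
  have "(49/50::real) ^ L * (50/49) ^ L = 1" by (simp add: power_mult_distrib[symmetric])
  then have "(49/50::real) ^ L * ((49 + real L) / 49) \<le> 1"
    using mult_left_mono[OF h, of "(49/50) ^ L"] pos by simp
  then have h2: "(49/50::real) ^ L * (49 + real L) \<le> 49" by (simp add: field_simps)
  have "(3 * real L + 1) * (49/50) ^ L \<le> (3 * (49 + real L)) * (49/50::real) ^ L"
    by (rule mult_right_mono) (use pos in auto)
  also have "\<dots> = 3 * ((49/50) ^ L * (49 + real L))" by (simp only: mult_ac)
  also have "\<dots> \<le> 147" using h2 by linarith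
  finally show ?thesis .
qed

lemma growth:
  assumes "2 * L + 1 \<le> E"
  shows "(3 * real L + 1) * (153/10) ^ (L + 1) \<le> 2 powr ((2 - 1/100) * real E + 11)"
proof -
  have b1: "2 powr (1/50) \<le> (51/50::real)"
  proof -
    have "1 + real 50 * (1/50) \<le> (1 + 1/50::real) ^ 50"
      by (rule Bernoulli_inequality) simp
    then have h: "2 \<le> (51/50::real) ^ 50" by simp
    have "2 powr (1/50) \<le> ((51/50::real) ^ 50) powr (1/50)"
      by (rule powr_mono2) (use h in auto)
    also have "(51/50::real) ^ 50 = (51/50) powr (real 50)"
      by (rule powr_realpow[symmetric]) simp
    also have "((51/50::real) powr (real 50)) powr (1/50) = (51/50) powr (real 50 * (1/50))"
      by (rule powr_powr)
    also have "real 50 * (1/50) = (1::real)" by simp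
    finally show ?thesis by simp
  qed
  have b2: "2 powr (1/100) \<le> (2::real)"
    using powr_mono[of "1/100" 1 "2::real"] by simp
  have e1: "2 powr ((1/100) * (2 * real L + 1)) = 2 powr (1/100) * (2 powr (1/50)) ^ L"
  proof -
    have "(1/100) * (2 * real L + 1) = 1/100 + real L * (1/50)" by simp
    then have "2 powr ((1/100) * (2 * real L + 1)) = 2 powr (1/100) * 2 powr (real L * (1/50))"
      by (simp only: powr_add)
    also have "2 powr (real L * (1/50)) = (2 powr (1/50::real)) ^ L"
      by (rule powr_power[symmetric]) simp
    finally show ?thesis .
  qed
  have e1b: "2 powr ((1/100) * (2 * real L + 1)) \<le> 2 * (51/50) ^ L"
    unfolding e1 by (intro mult_mono power_mono b1 b2) auto
  define Q where "Q = 2 powr ((1/100) * (2 * real L + 1))"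
  have Qpos: "0 < Q" unfolding Q_def by simp
  have P1: "2 powr ((2 - 1/100) * (2 * real L + 1) + 11) \<le> 2 powr ((2 - 1/100) * real E + 11)"
    by (rule powr_mono) (use assms in auto)
  have P2: "2 powr ((2 - 1/100) * (2 * real L + 1) + 11) = 16 ^ (L + 1) * 512 / Q"
  proof -
    have "(2 - 1/100) * (2 * real L + 1) + 11 = real (4 * L + 13) - (1/100) * (2 * real L + 1)"
      by (simp add: field_simps)
    then have "2 powr ((2 - 1/100) * (2 * real L + 1) + 11) = 2 powr real (4 * L + 13) / Q"
      unfolding Q_def by (simp only: powr_diff)
    also have "2 powr real (4 * L + 13) = (2::real) ^ (4 * L + 13)"
      by (rule powr_realpow) simp
    also have "(2::real) ^ (4 * L + 13) = 16 ^ (L + 1) * 512"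
      by (simp add: power_add power_mult)
    finally show ?thesis .
  qed
  have P3: "(3 * real L + 1) * (153/10) ^ (L + 1) * Q \<le> 16 ^ (L + 1) * 512"
  proof -
    have "(153/10::real) ^ (L + 1) = 16 ^ (L + 1) * (153/160) ^ (L + 1)"
      by (simp add: power_mult_distrib[symmetric])
    then have "(3 * real L + 1) * (153/10) ^ (L + 1) * Q
        = 16 ^ (L + 1) * ((3 * real L + 1) * (153/160) ^ (L + 1) * Q)"
      by (simp only: mult_ac)
    also have "(3 * real L + 1) * (153/160) ^ (L + 1) * Q
        \<le> (3 * real L + 1) * (153/160) ^ (L + 1) * (2 * (51/50) ^ L)"
      unfolding Q_def by (intro mult_left_mono e1b) auto
    also have "\<dots> = 2 * (153/160) * ((3 * real L + 1) * ((153/160) * (51/50)) ^ L)"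
      by (simp only: power_mult_distrib power_Suc Suc_eq_plus1[symmetric] mult_ac)
    also have "\<dots> \<le> 2 * (153/160) * ((3 * real L + 1) * (49/50) ^ L)"
      by (intro mult_left_mono power_mono) auto
    also have "\<dots> \<le> 2 * (153/160) * 147"
      by (intro mult_left_mono lin_geo) auto
    also have "\<dots> \<le> 512" by simp
    finally show ?thesis by (simp add: mult_left_mono)
  qed
  have "(3 * real L + 1) * (153/10) ^ (L + 1) \<le> 16 ^ (L + 1) * 512 / Q"
    using P3 Qpos by (simp only: pos_le_divide_eq)
  also have "\<dots> \<le> 2 powr ((2 - 1/100) * real E + 11)" using P1 unfolding P2 .
  finally show ?thesis .
qed

definition Tg :: "nat \<Rightarrow> nat \<Rightarrow> nat \<Rightarrow> int \<Rightarrow> (nat set \<times> nat set \<times> nat set) set" where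
  "Tg N1 N2 N3 E = {(A, B, C). A \<subseteq> {..N1} \<and> B \<subseteq> {..N2} \<and> C \<subseteq> {..N3} \<and> 0 \<in> A \<and> 0 \<in> B \<and> 0 \<in> C \<and>
      (\<forall>a\<in>A. \<forall>b\<in>B. \<forall>c\<in>C. int (a + b + c) \<noteq> E)}"

lemma finite_Tg: "finite (Tg N1 N2 N3 E)"
proof -
  have "Tg N1 N2 N3 E \<subseteq> Pow {..N1} \<times> Pow {..N2} \<times> Pow {..N3}" by (auto simp: Tg_def)
  then show ?thesis by (rule finite_subset) auto
qed

lemma card_Tg_triv: "card (Tg N1 N2 N3 E) \<le> 2 ^ (N1 + N2 + N3)"
proof -
  let ?f = "\<lambda>(P, Q, R). (insert (0::nat) P, insert (0::nat) Q, insert (0::nat) R)"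
  have "Tg N1 N2 N3 E \<subseteq> ?f ` (Pow {1..N1} \<times> Pow {1..N2} \<times> Pow {1..N3})"
  proof
    fix X assume X: "X \<in> Tg N1 N2 N3 E"
    obtain A B C where XA: "X = (A, B, C)" by (cases X)
    have h: "A - {0} \<in> Pow {1..N1}" "B - {0} \<in> Pow {1..N2}" "C - {0} \<in> Pow {1..N3}"
      using X unfolding XA Tg_def by (auto simp: subset_iff Suc_le_eq)
    have "X = ?f (A - {0}, B - {0}, C - {0})" using X unfolding XA Tg_def by auto
    then show "X \<in> ?f ` (Pow {1..N1} \<times> Pow {1..N2} \<times> Pow {1..N3})" using h by blast
  qed
  then have "card (Tg N1 N2 N3 E) \<le> card (?f ` (Pow {1..N1} \<times> Pow {1..N2} \<times> Pow {1..N3}))"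
    by (rule card_mono[rotated]) auto
  also have "\<dots> \<le> card (Pow {1..N1} \<times> Pow {1..N2} \<times> Pow {1..N3})" by (rule card_image_le) auto
  also have "\<dots> = 2 ^ (N1 + N2 + N3)" by (simp add: card_cartesian_product card_Pow power_add)
  finally show ?thesis .
qed

lemma core_bound:
  assumes "E \<ge> 1 \<Longrightarrow> E \<le> int N1 \<and> E \<le> int N2 \<and> E \<le> int N3"
  shows "real (card (Tg N1 N2 N3 E)) \<le> 2 powr (real (N1 + N2 + N3) - real_of_int E - (1/100) * \<bar>real_of_int E\<bar> + 11)"
proof (cases "E \<ge> 1")
  case False
  have "real (card (Tg N1 N2 N3 E)) \<le> 2 ^ (N1 + N2 + N3)"
    using card_Tg_triv[of N1 N2 N3 E] by (metis of_nat_le_iff of_nat_numeral of_nat_power)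
  also have "\<dots> = 2 powr (real (N1 + N2 + N3))" by (rule powr_realpow[symmetric]) simp
  also have "\<dots> \<le> 2 powr (real (N1 + N2 + N3) - real_of_int E - (1/100) * \<bar>real_of_int E\<bar> + 11)"
    by (rule powr_mono) (use False in auto)
  finally show ?thesis .
next
  case True
  define e where "e = nat E"
  have Ee: "E = int e" using True by (simp add: e_def)
  have h: "1 \<le> e" "e \<le> N1" "e \<le> N2" "e \<le> N3" using assms True Ee by auto
  have TT: "Tg N1 N2 N3 E = Tset N1 N2 N3 e" unfolding Tg_def Tset_def Ee
    by (simp only: of_nat_eq_iff)
  define L where "L = (e - 1) div 2"
  have L: "2 * L + 1 \<le> e" unfolding L_def using h by linarith
  have "real (card (Tg N1 N2 N3 E)) \<le> (3 * L + 1) * (2 ^ (N1 + N2 + N3 - 3 * e) * (153/10) ^ (L + 1))"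
    unfolding TT L_def using card_Tset[OF h] by (simp only: of_nat_mult of_nat_add of_nat_1 of_nat_numeral)
  also have "\<dots> = 2 ^ (N1 + N2 + N3 - 3 * e) * ((3 * real L + 1) * (153/10) ^ (L + 1))" by simp
  also have "\<dots> \<le> 2 ^ (N1 + N2 + N3 - 3 * e) * 2 powr ((2 - 1/100) * real e + 11)"
    by (intro mult_left_mono growth L) simp
  also have "\<dots> = 2 powr (real (N1 + N2 + N3 - 3 * e) + ((2 - 1/100) * real e + 11))"
    by (simp add: powr_add powr_realpow)
  also have "real (N1 + N2 + N3 - 3 * e) + ((2 - 1/100) * real e + 11) =
      real (N1 + N2 + N3) - real_of_int E - (1/100) * \<bar>real_of_int E\<bar> + 11"
    using h Ee by (simp add: of_nat_diff algebra_simps)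
  finally show ?thesis .
qed


lemma c07_props: "real_of_int (c07 n) \<ge> 7/10 * real n" "real_of_int (c07 n) < 7/10 * real n + 1"
  unfolding c07_def by linarith+

lemma wid_props: "real_of_int (wid n) \<le> 4/10 * real n" "wid n \<ge> 0"
  unfolding wid_def by linarith+

lemma hR_eq: "hR n p = (fst p + snd p - c07 n) div 2"
  unfolding hR_def using floor_divide_of_int_eq[of "fst p + snd p - c07 n" 2] by simp

lemma hL_eq: "hL n p = (fst p + snd p - 2 * c07 n) div 2"
  unfolding hL_def using floor_divide_of_int_eq[of "fst p + snd p - 2 * c07 n" 2] by simp

lemma int_le_nat: "real_of_int x \<le> real n \<Longrightarrow> x \<le> int n"
proof -
  assume "real_of_int x \<le> real n"
  then have "real_of_int x \<le> real_of_int (int n)" by simp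
  then show ?thesis by (simp only: of_int_le_iff)
qed

lemma int_ge_nat: "- real n \<le> real_of_int x \<Longrightarrow> - int n \<le> x"
proof -
  assume "- real n \<le> real_of_int x"
  then have "real_of_int (- int n) \<le> real_of_int x" by simp
  then show ?thesis by (simp only: of_int_le_iff)
qed

lemma LamR_box: "LamR n \<subseteq> {- int n..int n} \<times> {- int n..int n}"
proof
  fix p assume p: "p \<in> LamR n"
  obtain x y where xy: "p = (x, y)" by (cases p)
  have h: "7/10 * real n \<le> real_of_int (x + y)" "real_of_int (x + y) \<le> real n" "\<bar>real_of_int (x - y)\<bar> \<le> 8/10 * real n"
    using p unfolding xy LamR_def by auto
  have "real_of_int (x - y) \<le> 8/10 * real n \<and> - real_of_int (x - y) \<le> 8/10 * real n"
    using h(3) by (simp only: abs_le_iff)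
  then have h2: "real_of_int (x - y) \<le> 8/10 * real n" "- (8/10 * real n) \<le> real_of_int (x - y)"
    by linarith+
  have "real_of_int x \<le> real n" "real_of_int y \<le> real n" "- real n \<le> real_of_int x" "- real n \<le> real_of_int y"
  proof -
    have h3: "real_of_int (x + y) = real_of_int x + real_of_int y" "real_of_int (x - y) = real_of_int x - real_of_int y" by simp_all
    show "real_of_int x \<le> real n" "real_of_int y \<le> real n" "- real n \<le> real_of_int x" "- real n \<le> real_of_int y"
      using h h2 h3 by linarith+
  qed
  then show "p \<in> {- int n..int n} \<times> {- int n..int n}"
    unfolding xy using int_le_nat int_ge_nat by auto
qed

lemma LamL_box: "LamL n \<subseteq> {- 2 * int n..2 * int n} \<times> {- 2 * int n..2 * int n}"
proof
  fix p assume p: "p \<in> LamL n"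
  obtain x y where xy: "p = (x, y)" by (cases p)
  have "real_of_int (2 * c07 n) \<ge> 0" using c07_props[of n] by simp
  moreover have h: "real_of_int (2 * c07 n) \<le> real_of_int (x + y)" "real_of_int (x + y) \<le> 17/10 * real n" "\<bar>real_of_int (x - y)\<bar> \<le> 4/10 * real n"
    using p unfolding xy LamL_def by auto
  moreover have "real_of_int (x - y) \<le> 4/10 * real n \<and> - real_of_int (x - y) \<le> 4/10 * real n"
    using h(3) by (simp only: abs_le_iff)
  then have h2: "real_of_int (x - y) \<le> 4/10 * real n" "- (4/10 * real n) \<le> real_of_int (x - y)"
    by linarith+
  ultimately have "real_of_int x \<le> real (2 * n)" "real_of_int y \<le> real (2 * n)" "- real (2 * n) \<le> real_of_int x" "- real (2 * n) \<le> real_of_int y"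
  proof -
    have h3: "real_of_int (x + y) = real_of_int x + real_of_int y" "real_of_int (x - y) = real_of_int x - real_of_int y"
      "real (2 * n) = 2 * real n" by simp_all
    show "real_of_int x \<le> real (2 * n)" "real_of_int y \<le> real (2 * n)" "- real (2 * n) \<le> real_of_int x" "- real (2 * n) \<le> real_of_int y"
      using h h2 h3 \<open>real_of_int (2 * c07 n) \<ge> 0\<close> by linarith+
  qed
  then show "p \<in> {- 2 * int n..2 * int n} \<times> {- 2 * int n..2 * int n}"
    unfolding xy using int_le_nat[of _ "2 * n"] int_ge_nat[of "2 * n"] by auto
qed

lemma finite_fibR: "finite (fibR n i)"
  unfolding fibR_def by (rule finite_subset[OF _ finite_subset[OF LamR_box]]) auto

lemma finite_fibL: "finite (fibL n k)"
  unfolding fibL_def by (rule finite_subset[OF _ finite_subset[OF LamL_box]]) auto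

lemma fibR_form: "p \<in> fibR n i \<Longrightarrow> p = (snd p + i, snd p)"
  unfolding fibR_def by (cases p) auto

lemma fibL_form: "p \<in> fibL n k \<Longrightarrow> p = (snd p + k, snd p)"
  unfolding fibL_def by (cases p) auto

lemma memR:
  assumes "\<bar>i\<bar> \<le> 2 * wid n"
  shows "(y + i, y) \<in> fibR n i \<longleftrightarrow> c07 n \<le> 2 * y + i \<and> 2 * y + i \<le> int n"
proof -
  have "real_of_int \<bar>i\<bar> \<le> 8/10 * real n" using assms wid_props[of n] by linarith
  then have ai: "\<bar>real_of_int i\<bar> \<le> 8/10 * real n" by simp
  have "(y + i, y) \<in> fibR n i \<longleftrightarrow> 7/10 * real n \<le> real_of_int (2 * y + i) \<and> real_of_int (2 * y + i) \<le> real n"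
    unfolding fibR_def LamR_def using ai by (auto simp: algebra_simps)
  also have "\<dots> \<longleftrightarrow> c07 n \<le> 2 * y + i \<and> 2 * y + i \<le> int n"
  proof -
    have e1: "c07 n \<le> 2 * y + i \<longleftrightarrow> 7/10 * real n \<le> real_of_int (2 * y + i)"
      unfolding c07_def by (rule ceiling_le_iff)
    have e2: "2 * y + i \<le> int n \<longleftrightarrow> real_of_int (2 * y + i) \<le> real n"
    proof -
      have "2 * y + i \<le> int n \<longleftrightarrow> real_of_int (2 * y + i) \<le> real_of_int (int n)"
        by (simp only: of_int_le_iff)
      then show ?thesis by simp
    qed
    show ?thesis by (simp only: e1 e2)
  qed
  finally show ?thesis .
qed

lemma memL:
  assumes "\<bar>k\<bar> \<le> wid n"
  shows "(y + k, y) \<in> fibL n k \<longleftrightarrow> 2 * c07 n \<le> 2 * y + k \<and> real_of_int (2 * y + k) \<le> 17/10 * real n"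
proof -
  have "real_of_int \<bar>k\<bar> \<le> 4/10 * real n" using assms wid_props[of n] by linarith
  then have ai: "\<bar>real_of_int k\<bar> \<le> 4/10 * real n" by simp
  show ?thesis
    unfolding fibL_def LamL_def using ai by (auto simp: algebra_simps)
qed

lemma fibR_fst: "p \<in> fibR n i \<Longrightarrow> fst p = snd p + i"
  unfolding fibR_def by auto

lemma fibL_fst: "p \<in> fibL n k \<Longrightarrow> fst p = snd p + k"
  unfolding fibL_def by auto

lemma div2_shift: "((y::int) + i + y - c) div 2 = y + (i - c) div 2"
  by presburger

lemma hR_fib: "p \<in> fibR n i \<Longrightarrow> hR n p = snd p + (i - c07 n) div 2"
  unfolding hR_eq by (simp only: fibR_fst div2_shift)

lemma hL_fib: "p \<in> fibL n k \<Longrightarrow> hL n p = snd p + (k - 2 * c07 n) div 2"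
  unfolding hL_eq by (simp only: fibL_fst div2_shift)

lemma profile_R:
  assumes hp: "has_profile n S m M" and i: "\<bar>i\<bar> \<le> 2 * wid n"
    and p0: "p0 \<in> fibR n i" "hR n p0 = m i"
  shows "p0 \<in> S" and "\<And>p. p \<in> S \<inter> fibR n i \<Longrightarrow> snd p0 \<le> snd p"
proof -
  let ?X = "S \<inter> fibR n i"
  have fin: "finite ?X" using finite_fibR by auto
  have ne: "?X \<noteq> {}" using hp i unfolding has_profile_def meets_all_fibers_def by auto
  have mi: "m i = Min (hR n ` ?X)" using hp i unfolding has_profile_def by auto
  have "Min (hR n ` ?X) \<in> hR n ` ?X" using fin ne by (intro Min_in) auto
  then obtain q where q: "q \<in> ?X" "hR n q = m i" using mi by auto
  have "snd q = snd p0" using q p0 hR_fib[of q n i] hR_fib[of p0 n i] by auto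
  moreover have "fst q = snd q + i" "fst p0 = snd p0 + i" using q p0 fibR_fst by auto
  ultimately have "q = p0" by (simp add: prod_eq_iff)
  then show "p0 \<in> S" using q by auto
  fix p assume p: "p \<in> ?X"
  have "m i \<le> hR n p" unfolding mi using fin p by (intro Min_le) auto
  then show "snd p0 \<le> snd p" using p p0 hR_fib[of p n i] hR_fib[of p0 n i] by auto
qed

lemma profile_L:
  assumes hp: "has_profile n S m M" and k: "\<bar>k\<bar> \<le> wid n"
    and p0: "p0 \<in> fibL n k" "hL n p0 = M k"
  shows "p0 \<in> S" and "\<And>p. p \<in> S \<inter> fibL n k \<Longrightarrow> snd p \<le> snd p0"
proof -
  let ?X = "S \<inter> fibL n k"
  have fin: "finite ?X" using finite_fibL by auto
  have ne: "?X \<noteq> {}" using hp k unfolding has_profile_def meets_all_fibers_def by auto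
  have mi: "M k = Max (hL n ` ?X)" using hp k unfolding has_profile_def by auto
  have "Max (hL n ` ?X) \<in> hL n ` ?X" using fin ne by (intro Max_in) auto
  then obtain q where q: "q \<in> ?X" "hL n q = M k" using mi by auto
  have "snd q = snd p0" using q p0 hL_fib[of q n k] hL_fib[of p0 n k] by auto
  moreover have "fst q = snd q + k" "fst p0 = snd p0 + k" using q p0 fibL_fst by auto
  ultimately have "q = p0" by (simp add: prod_eq_iff)
  then show "p0 \<in> S" using q by auto
  fix p assume p: "p \<in> ?X"
  have "hL n p \<le> M k" unfolding mi using fin p by (intro Max_ge) auto
  then show "snd p \<le> snd p0" using p p0 hL_fib[of p n k] hL_fib[of p0 n k] by auto
qed

lemma hd1: "2 * z \<le> (w::int) \<Longrightarrow> z \<le> w div 2" by presburger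
lemma hd2: "(w::int) \<le> 2 * z \<Longrightarrow> (w + 1) div 2 \<le> z" by presburger
lemma hd3: "2 * (w div 2) \<le> (w::int)" "w \<le> 2 * ((w + 1) div 2)" by presburger+
lemma hd4: "0 \<le> (u + v) div 2 - u div 2 - v div 2 \<and> (u + v) div 2 - u div 2 - v div 2 \<le> (1::int)" by presburger
lemma hd5: "z \<le> (w::int) div 2 \<Longrightarrow> 2 * z \<le> w" by presburger
lemma hd6: "(w + 1) div 2 \<le> (z::int) \<Longrightarrow> w \<le> 2 * z" by presburger

lemma anchor_R:
  assumes hp: "has_profile n S m M" and i: "\<bar>i\<bar> \<le> 2 * wid n"
  shows "\<exists>p0 \<in> fibR n i. hR n p0 = m i"
proof -
  let ?X = "S \<inter> fibR n i"
  have fin: "finite ?X" using finite_fibR by auto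
  have ne: "?X \<noteq> {}" using hp i unfolding has_profile_def meets_all_fibers_def by auto
  have mi: "m i = Min (hR n ` ?X)" using hp i unfolding has_profile_def by auto
  have "Min (hR n ` ?X) \<in> hR n ` ?X" using fin ne by (intro Min_in) auto
  then show ?thesis using mi by auto
qed

lemma anchor_L:
  assumes hp: "has_profile n S m M" and k: "\<bar>k\<bar> \<le> wid n"
  shows "\<exists>p0 \<in> fibL n k. hL n p0 = M k"
proof -
  let ?X = "S \<inter> fibL n k"
  have fin: "finite ?X" using finite_fibL by auto
  have ne: "?X \<noteq> {}" using hp k unfolding has_profile_def meets_all_fibers_def by auto
  have mi: "M k = Max (hL n ` ?X)" using hp k unfolding has_profile_def by auto
  have "Max (hL n ` ?X) \<in> hL n ` ?X" using fin ne by (intro Max_in) auto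
  then show ?thesis using mi by auto
qed

lemma arith_final:
  fixes N e t d a :: real
  shows "d \<le> t + 1 \<Longrightarrow> N \<le> a + e \<Longrightarrow> N - e - (1/100) * t + 11 \<le> a - 1/100 * d + 12"
  by linarith

lemma main_bound:
  fixes n :: nat and i j :: int and m M :: "int \<Rightarrow> int" and S0 :: "pt set"
  assumes hi: "\<bar>i\<bar> \<le> 2 * wid n" and hj: "\<bar>j\<bar> \<le> 2 * wid n" and hk: "\<bar>i + j\<bar> \<le> wid n"
    and hp0: "has_profile n S0 m M"
  shows "real (card {S'. \<exists>S. S \<subseteq> LamR n \<union> LamL n \<and> sum_free S \<and> has_profile n S m M \<and>
                          S' = S \<inter> (fibR n i \<union> fibR n j \<union> fibL n (i + j))})
          \<le> 2 powr ((3/10) * real n - 1/100 * real_of_int \<bar>M (i + j) - m j - m i\<bar> + 12)"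
proof -
  define k where "k = i + j"
  have hk': "\<bar>k\<bar> \<le> wid n" using hk by (simp add: k_def)
  define c where "c = c07 n"
  have c07: "real_of_int c \<ge> 7/10 * real n" using c07_props[of n] by (simp add: c_def)
  obtain a0 where a0: "a0 \<in> fibR n i" "hR n a0 = m i" using anchor_R[OF hp0 hi] by blast
  obtain b0 where b0: "b0 \<in> fibR n j" "hR n b0 = m j" using anchor_R[OF hp0 hj] by blast
  obtain c0 where c0: "c0 \<in> fibL n k" "hL n c0 = M k" using anchor_L[OF hp0 hk'] by blast
  define ya where "ya = snd a0"
  define yb where "yb = snd b0"
  define yc where "yc = snd c0"
  have a0e: "a0 = (ya + i, ya)" using fibR_form[OF a0(1)] by (simp add: ya_def)
  have b0e: "b0 = (yb + j, yb)" using fibR_form[OF b0(1)] by (simp add: yb_def)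
  have c0e: "c0 = (yc + k, yc)" using fibL_form[OF c0(1)] by (simp add: yc_def)
  have ya1: "c \<le> 2 * ya + i" "2 * ya + i \<le> int n" using a0(1) memR[OF hi, of ya] a0e c_def by auto
  have yb1: "c \<le> 2 * yb + j" "2 * yb + j \<le> int n" using b0(1) memR[OF hj, of yb] b0e c_def by auto
  have yc1: "2 * c \<le> 2 * yc + k" "real_of_int (2 * yc + k) \<le> 17/10 * real n"
    using c0(1) memL[OF hk', of yc] c0e c_def by auto
  define N1 where "N1 = nat ((int n - i) div 2 - ya)"
  define N2 where "N2 = nat ((int n - j) div 2 - yb)"
  define N3 where "N3 = nat (yc - (2 * c - k + 1) div 2)"
  define E where "E = yc - ya - yb"
  have N1i: "int N1 = (int n - i) div 2 - ya" unfolding N1_def using hd1[of ya "int n - i"] ya1 by simp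
  have N2i: "int N2 = (int n - j) div 2 - yb" unfolding N2_def using hd1[of yb "int n - j"] yb1 by simp
  have N3i: "int N3 = yc - (2 * c - k + 1) div 2" unfolding N3_def using hd2[of "2 * c - k" yc] yc1 by simp
  have Eb: "E \<le> int N1 \<and> E \<le> int N2 \<and> E \<le> int N3" if "E \<ge> 1"
  proof -
    have "real_of_int c \<le> real_of_int (2 * yb + j)" using yb1(1) by (simp only: of_int_le_iff)
    then have "real_of_int (2 * yc + k) - real_of_int (2 * yb + j) \<le> real n"
      using yc1(2) c07 by linarith
    then have "2 * (yc - yb) \<le> int n - i" using int_le_nat[of "2 * yc + k - (2 * yb + j)" n] by (simp add: k_def)
    then have e1: "yc - yb \<le> (int n - i) div 2" by (rule hd1)
    have "real_of_int c \<le> real_of_int (2 * ya + i)" using ya1(1) by (simp only: of_int_le_iff)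
    then have "real_of_int (2 * yc + k) - real_of_int (2 * ya + i) \<le> real n"
      using yc1(2) c07 by linarith
    then have "2 * (yc - ya) \<le> int n - j" using int_le_nat[of "2 * yc + k - (2 * ya + i)" n] by (simp add: k_def)
    then have e2: "yc - ya \<le> (int n - j) div 2" by (rule hd1)
    have "2 * c - k \<le> 2 * (ya + yb)" using ya1(1) yb1(1) by (simp add: k_def)
    then have e3: "(2 * c - k + 1) div 2 \<le> ya + yb" by (rule hd2)
    show ?thesis using e1 e2 e3 N1i N2i N3i by (simp add: E_def)
  qed
  have Nsum: "real (N1 + N2 + N3) \<le> 3/10 * real n + real_of_int E"
  proof -
    have "2 * ((int n - i) div 2) \<le> int n - i" "2 * ((int n - j) div 2) \<le> int n - j"
      "2 * c - k \<le> 2 * ((2 * c - k + 1) div 2)" using hd3 by auto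
    then have "2 * (int N1 + int N2 + int N3) \<le> 2 * int n - 2 * c + 2 * E"
      using N1i N2i N3i by (simp add: E_def k_def)
    then have "real_of_int (2 * (int N1 + int N2 + int N3)) \<le> real_of_int (2 * int n - 2 * c + 2 * E)"
      by (simp only: of_int_le_iff)
    then show ?thesis using c07 by simp
  qed
  have Db: "\<bar>M k - m j - m i\<bar> \<le> \<bar>E\<bar> + 1"
  proof -
    have "M k = yc + (k - 2 * c) div 2" using c0 hL_fib[OF c0(1)] by (simp add: yc_def c_def)
    moreover have "m i = ya + (i - c) div 2" using a0 hR_fib[OF a0(1)] by (simp add: ya_def c_def)
    moreover have "m j = yb + (j - c) div 2" using b0 hR_fib[OF b0(1)] by (simp add: yb_def c_def)
    moreover have "k - 2 * c = (i - c) + (j - c)" by (simp add: k_def)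
    ultimately have "M k - m j - m i = E + (((i - c) + (j - c)) div 2 - (i - c) div 2 - (j - c) div 2)"
      by (simp add: E_def)
    then show ?thesis using hd4[of "i - c" "j - c"] by linarith
  qed
  define \<phi> where "\<phi> = (\<lambda>(A::nat set, B::nat set, C::nat set).
      (\<lambda>a. (ya + int a + i, ya + int a)) ` A \<union> (\<lambda>b. (yb + int b + j, yb + int b)) ` B \<union>
      (\<lambda>d. (yc - int d + k, yc - int d)) ` C)"
  define F where "F = {S'. \<exists>S. S \<subseteq> LamR n \<union> LamL n \<and> sum_free S \<and> has_profile n S m M \<and>
                          S' = S \<inter> (fibR n i \<union> fibR n j \<union> fibL n (i + j))}"
  have Fsub: "F \<subseteq> \<phi> ` Tg N1 N2 N3 E"
  proof
    fix S' assume "S' \<in> F"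
    then obtain S where sf: "sum_free S" and hp: "has_profile n S m M"
      and S'e: "S' = S \<inter> (fibR n i \<union> fibR n j \<union> fibL n k)" unfolding F_def k_def by blast
    have a0S: "a0 \<in> S" and a0m: "\<And>p. p \<in> S \<inter> fibR n i \<Longrightarrow> ya \<le> snd p"
      using profile_R[OF hp hi a0] by (auto simp: ya_def)
    have b0S: "b0 \<in> S" and b0m: "\<And>p. p \<in> S \<inter> fibR n j \<Longrightarrow> yb \<le> snd p"
      using profile_R[OF hp hj b0] by (auto simp: yb_def)
    have c0S: "c0 \<in> S" and c0m: "\<And>p. p \<in> S \<inter> fibL n k \<Longrightarrow> snd p \<le> yc"
      using profile_L[OF hp hk' c0] by (auto simp: yc_def)
    define A where "A = {a \<in> {..N1}. (ya + int a + i, ya + int a) \<in> S}"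
    define B where "B = {b \<in> {..N2}. (yb + int b + j, yb + int b) \<in> S}"
    define C where "C = {d \<in> {..N3}. (yc - int d + k, yc - int d) \<in> S}"
    have T: "(A, B, C) \<in> Tg N1 N2 N3 E"
      unfolding Tg_def
    proof (clarsimp, intro conjI)
      show "A \<subseteq> {..N1}" "B \<subseteq> {..N2}" "C \<subseteq> {..N3}" by (auto simp: A_def B_def C_def)
      show "0 \<in> A" using a0S a0e by (simp add: A_def)
      show "0 \<in> B" using b0S b0e by (simp add: B_def)
      show "0 \<in> C" using c0S c0e by (simp add: C_def)
      show "\<forall>a\<in>A. \<forall>b\<in>B. \<forall>d\<in>C. int a + int b + int d \<noteq> E"
      proof (intro ballI notI)
        fix a b d assume a: "a \<in> A" and b: "b \<in> B" and d: "d \<in> C" and e: "int a + int b + int d = E"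
        have p: "(ya + int a + i, ya + int a) \<in> S" using a by (simp add: A_def)
        have q: "(yb + int b + j, yb + int b) \<in> S" using b by (simp add: B_def)
        have r: "(yc - int d + k, yc - int d) \<in> S" using d by (simp add: C_def)
        have "(ya + int a + i + (yb + int b + j), ya + int a + (yb + int b)) = (yc - int d + k, yc - int d)"
          using e by (simp add: E_def k_def algebra_simps)
        moreover have "(fst (ya + int a + i, ya + int a) + fst (yb + int b + j, yb + int b),
            snd (ya + int a + i, ya + int a) + snd (yb + int b + j, yb + int b)) \<notin> S"
          using sf p q unfolding sum_free_def by blast
        ultimately show False using r by simp
      qed
    qed
    have "S' = \<phi> (A, B, C)"
    proof
      show "S' \<subseteq> \<phi> (A, B, C)"
      proof
        fix p assume "p \<in> S'"
        then have pS: "p \<in> S" and pf: "p \<in> fibR n i \<or> p \<in> fibR n j \<or> p \<in> fibL n k" using S'e by auto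
        from pf show "p \<in> \<phi> (A, B, C)"
        proof (elim disjE)
          assume pR: "p \<in> fibR n i"
          have pe: "p = (snd p + i, snd p)" by (rule fibR_form[OF pR])
          have "ya \<le> snd p" using a0m pS pR by auto
          moreover have "2 * snd p + i \<le> int n" using pR memR[OF hi, of "snd p"] pe by auto
          then have "snd p \<le> (int n - i) div 2" using hd1 by auto
          ultimately have "nat (snd p - ya) \<in> A" "int (nat (snd p - ya)) = snd p - ya"
            using pS pe N1i by (auto simp: A_def)
          then show ?thesis unfolding \<phi>_def using pe by (auto intro!: image_eqI[where x="nat (snd p - ya)"])
        next
          assume pR: "p \<in> fibR n j"
          have pe: "p = (snd p + j, snd p)" by (rule fibR_form[OF pR])
          have "yb \<le> snd p" using b0m pS pR by auto
          moreover have "2 * snd p + j \<le> int n" using pR memR[OF hj, of "snd p"] pe by auto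
          then have "snd p \<le> (int n - j) div 2" using hd1 by auto
          ultimately have "nat (snd p - yb) \<in> B" "int (nat (snd p - yb)) = snd p - yb"
            using pS pe N2i by (auto simp: B_def)
          then show ?thesis unfolding \<phi>_def using pe by (auto intro!: image_eqI[where x="nat (snd p - yb)"])
        next
          assume pL: "p \<in> fibL n k"
          have pe: "p = (snd p + k, snd p)" by (rule fibL_form[OF pL])
          have "snd p \<le> yc" using c0m pS pL by auto
          moreover have "2 * c \<le> 2 * snd p + k" using pL memL[OF hk', of "snd p"] pe c_def by auto
          then have "(2 * c - k + 1) div 2 \<le> snd p" using hd2 by auto
          ultimately have "nat (yc - snd p) \<in> C" "int (nat (yc - snd p)) = yc - snd p"
            using pS pe N3i by (auto simp: C_def)
          then show ?thesis unfolding \<phi>_def using pe by (auto intro!: image_eqI[where x="nat (yc - snd p)"])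
        qed
      qed
    next
      show "\<phi> (A, B, C) \<subseteq> S'"
      proof
        fix p assume "p \<in> \<phi> (A, B, C)"
        then consider (a) a where "a \<in> A" "p = (ya + int a + i, ya + int a)"
          | (b) b where "b \<in> B" "p = (yb + int b + j, yb + int b)"
          | (d) d where "d \<in> C" "p = (yc - int d + k, yc - int d)"
          unfolding \<phi>_def by auto
        then show "p \<in> S'"
        proof cases
          case a
          have "ya + int a \<le> (int n - i) div 2" using a N1i by (auto simp: A_def)
          then have "2 * (ya + int a) \<le> int n - i" by (rule hd5)
          then have "2 * (ya + int a) + i \<le> int n" by simp
          moreover have "c \<le> 2 * (ya + int a) + i" using ya1 by simp
          ultimately have "p \<in> fibR n i" using memR[OF hi, of "ya + int a"] a c_def by simp
          then show ?thesis using a S'e by (auto simp: A_def)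
        next
          case b
          have "yb + int b \<le> (int n - j) div 2" using b N2i by (auto simp: B_def)
          then have "2 * (yb + int b) \<le> int n - j" by (rule hd5)
          then have "2 * (yb + int b) + j \<le> int n" by simp
          moreover have "c \<le> 2 * (yb + int b) + j" using yb1 by simp
          ultimately have "p \<in> fibR n j" using memR[OF hj, of "yb + int b"] b c_def by simp
          then show ?thesis using b S'e by (auto simp: B_def)
        next
          case d
          have "(2 * c - k + 1) div 2 \<le> yc - int d" using d N3i by (auto simp: C_def)
          then have "2 * c - k \<le> 2 * (yc - int d)" by (rule hd6)
          moreover have "real_of_int (2 * (yc - int d) + k) \<le> real_of_int (2 * yc + k)" by simp
          ultimately have "p \<in> fibL n k" using memL[OF hk', of "yc - int d"] d c_def yc1 by simp
          then show ?thesis using d S'e by (auto simp: C_def)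
        qed
      qed
    qed
    then show "S' \<in> \<phi> ` Tg N1 N2 N3 E" using T by (rule image_eqI)
  qed
  have "card F \<le> card (\<phi> ` Tg N1 N2 N3 E)"
    by (rule card_mono[OF _ Fsub]) (simp add: finite_Tg)
  also have "\<dots> \<le> card (Tg N1 N2 N3 E)" by (rule card_image_le[OF finite_Tg])
  finally have "real (card F) \<le> real (card (Tg N1 N2 N3 E))" by simp
  also have "\<dots> \<le> 2 powr (real (N1 + N2 + N3) - real_of_int E - (1/100) * \<bar>real_of_int E\<bar> + 11)"
    by (rule core_bound) (rule Eb)
  also have "\<dots> \<le> 2 powr ((3/10) * real n - 1/100 * real_of_int \<bar>M k - m j - m i\<bar> + 12)"
  proof (rule powr_mono)
    have "real_of_int \<bar>M k - m j - m i\<bar> \<le> \<bar>real_of_int E\<bar> + 1"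
    proof -
      have "real_of_int \<bar>M k - m j - m i\<bar> \<le> real_of_int (\<bar>E\<bar> + 1)" using Db by (simp only: of_int_le_iff)
      then show ?thesis by simp
    qed
    then show "real (N1 + N2 + N3) - real_of_int E - (1/100) * \<bar>real_of_int E\<bar> + 11
        \<le> (3/10) * real n - 1/100 * real_of_int \<bar>M k - m j - m i\<bar> + 12"
      using Nsum arith_final by blast
  qed simp
  finally have "real (card F) \<le> 2 powr ((3/10) * real n - 1/100 * real_of_int \<bar>M k - m j - m i\<bar> + 12)" .
  then show ?thesis by (simp only: F_def k_def)
qed

theorem mainTheorem16:
  "\<exists>(\<alpha>::real) (C::real). \<alpha> > 0 \<and>
     (\<forall>(n::nat) (i::int) (j::int) (m::int \<Rightarrow> int) (M::int \<Rightarrow> int) S0.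
        n > 0 \<longrightarrow> i \<noteq> j \<longrightarrow> \<bar>i\<bar> \<le> 2 * wid n \<longrightarrow> \<bar>j\<bar> \<le> 2 * wid n \<longrightarrow>
        \<bar>i + j\<bar> \<le> wid n \<longrightarrow>
        S0 \<subseteq> LamR n \<union> LamL n \<longrightarrow> sum_free S0 \<longrightarrow> has_profile n S0 m M \<longrightarrow>
        real (card {S'. \<exists>S. S \<subseteq> LamR n \<union> LamL n \<and> sum_free S \<and> has_profile n S m M \<and>
                          S' = S \<inter> (fibR n i \<union> fibR n j \<union> fibL n (i + j))})
          \<le> 2 powr ((3/10) * real n - \<alpha> * real_of_int \<bar>M (i + j) - m j - m i\<bar> + C))"
  apply (rule exI[of _ "1/100"], rule exI[of _ 12], rule conjI)
   apply simp
  apply (intro allI impI)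
  apply (rule main_bound)
     apply assumption+
  done

end
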